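(* The set $A = \{2^j : j \geq 2\} \cup \{3^k : k \geq 2\}$ is fractionally dense and contains no arithmetic progression of length three.
   Context: $\mathbb{N} = \{1,2,3,\ldots\}$. For $A \subseteq \mathbb{N}$, the quotient set is $R(A) = \{a/a' : a, a' \in A\}$, and $A$ is called fractionally dense if the closure of $R(A)$ in $\mathbb{R}$ equals $[0,\infty)$. An arithmetic progression of length three in $A$ is a triple $c, c+d, c+2d$ of elements of $A$ with $d \geq 1$ an integer. *)

theory Defs
  imports "HOL-Analysis.Analysis"
begin

definition quotient_set :: "nat set \<Rightarrow> real set" where
  "quotient_set A = {real a / real a' | a a'. a \<in> A \<and> a' \<in> A}"

definition fractionally_dense :: "nat set \<Rightarrow> bool" where
  "fractionally_dense A \<longleftrightarrow> closure (quotient_set A) = {0..}"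

definition has_3AP :: "nat set \<Rightarrow> bool" where
  "has_3AP A \<longleftrightarrow> (\<exists>c d. d \<ge> 1 \<and> c \<in> A \<and> c + d \<in> A \<and> c + 2 * d \<in> A)"

end

theory Submission
  imports Defs "HOL-Analysis.Kronecker_Approximation_Theorem"
begin

lemma theta_irrat: "ln 2 / ln (3::real) \<notin> \<rat>"
proof
  assume "ln (2::real) / ln 3 \<in> \<rat>"
  then obtain p q :: int where pq: "ln (2::real) / ln 3 = of_int p / of_int q" "q > 0"
    by (cases rule: Rats_cases') auto
  have l3: "ln (3::real) > 0" by simp
  have "of_int q * ln 2 = of_int p * ln (3::real)"
    using pq l3 by (simp add: field_simps)
  moreover have "ln (2::real) > 0" by simp
  ultimately have pp: "p > 0" using pq(2) l3
    by (smt (verit) mult_pos_pos of_int_0_less_iff zero_less_mult_pos2)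
  have "exp (of_int q * ln 2) = exp (of_int p * ln (3::real))"
    using \<open>of_int q * ln 2 = of_int p * ln (3::real)\<close> by simp
  moreover have "(2::real) ^ nat q = exp (real (nat q) * ln 2)" by (simp add: exp_of_nat_mult)
  moreover have "(3::real) ^ nat p = exp (real (nat p) * ln 3)" by (simp add: exp_of_nat_mult)
  moreover have "real (nat q) = of_int q" "real (nat p) = of_int p" using pq(2) pp by simp_all
  ultimately have "(2::real) ^ nat q = 3 ^ nat p" by simp
  hence "(2::nat) ^ nat q = 3 ^ nat p"
    by (metis of_nat_eq_iff of_nat_numeral of_nat_power)
  moreover have "even ((2::nat) ^ nat q)" using pq(2) by simp
  moreover have "odd ((3::nat) ^ nat p)" by simp
  ultimately show False by simp
qed

lemma approxD:
  assumes "y \<le> 0" "\<delta> > 0"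
  shows "\<exists>j k::nat. j > 0 \<and> \<bar>real j * (ln 2 / ln 3) - real k - y\<bar> < \<delta>"
proof -
  let ?t = "ln 2 / ln (3::real)"
  obtain j where j: "j > 0" "\<bar>frac (real j * ?t) - frac y\<bar> < \<delta>"
    using Kronecker_approx_1_explicit[OF theta_irrat, of "frac y" \<delta>] assms
    by (metis frac_ge_0 frac_lt_1 less_le_not_le)
  have "real j * ?t \<ge> 0" by simp
  hence f1: "floor (real j * ?t) \<ge> 0" by simp
  have f2: "floor y \<le> 0" using assms by simp
  define k where "k = nat (floor (real j * ?t) - floor y)"
  have z: "0 \<le> floor (real j * ?t) - floor y" using f1 f2 by linarith
  have kk: "int k = floor (real j * ?t) - floor y"
    unfolding k_def using z by (rule nat_0_le)
  have "real k = of_int (floor (real j * ?t)) - of_int (floor y)"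
    by (metis kk of_int_diff of_int_of_nat_eq)
  hence "real j * ?t - real k - y = frac (real j * ?t) - frac y"
    by (simp add: frac_def)
  thus ?thesis using j by (intro exI[of _ j] exI[of _ k]) simp
qed

lemma approx_pos:
  assumes "x > 0" "e > 0"
  shows "\<exists>j k::nat. j \<ge> 2 \<and> k \<ge> 2 \<and> \<bar>real (2^j) / real (3^k) - x\<bar> < e"
proof -
  obtain a :: nat where a: "real a > 9 * x" using reals_Archimedean2 by blast
  have aa: "real (2 ^ (a + 2)) \<ge> 9 * x"
  proof -
    have "a < 2 ^ a" by (rule less_exp)
    also have "(2::nat) ^ a \<le> 2 ^ (a+2)" by (rule power_increasing) simp_all
    finally have "a < 2 ^ (a+2)" .
    hence "real a < real (2 ^ (a+2))" by linarith
    thus ?thesis using a by linarith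
  qed
  define b where "b = a + 2"
  have bpos: "(2::real) ^ b > 0" by simp
  define y where "y = log 3 (9 * x / 2 ^ b)"
  have yle: "y \<le> 0" unfolding y_def using aa assms(1) unfolding b_def
    by (simp add: divide_le_eq)
  define g where "g = (\<lambda>z. (2::real) ^ b / 9 * 3 powr z)"
  have gy: "g y = x" unfolding g_def y_def using assms(1) by simp
  have "isCont g y" unfolding g_def by (intro continuous_intros) simp
  then obtain d where d0: "d > 0" and d1: "\<forall>z. dist z y < d \<longrightarrow> dist (g z) (g y) < e"
    using assms(2) unfolding continuous_at_eps_delta by blast
  have d: "d > 0" "\<And>z. \<bar>z - y\<bar> < d \<Longrightarrow> \<bar>g z - g y\<bar> < e"
    using d0 d1 by (auto simp: dist_real_def)
  obtain j k :: nat where jk: "j > 0" "\<bar>real j * (ln 2 / ln 3) - real k - y\<bar> < d"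
    using approxD[OF yle d(1)] by blast
  have "g (real j * (ln 2 / ln 3) - real k) = real (2 ^ (b + j)) / real (3 ^ (k + 2))"
  proof -
    have "(3::real) powr (real j * (ln 2 / ln 3) - real k) = 2 ^ j / 3 ^ k"
    proof -
      have e: "(real j * (ln 2 / ln 3) - real k) * ln 3 = real j * ln 2 - real k * ln (3::real)"
        by (simp add: field_simps)
      have "(3::real) powr (real j * (ln 2 / ln 3) - real k) = exp (real j * ln 2 - real k * ln 3)"
        unfolding powr_def using e by (simp add: mult.commute)
      also have "\<dots> = exp (real j * ln 2) / exp (real k * ln 3)" by (rule exp_diff)
      also have "\<dots> = 2 ^ j / 3 ^ k" by (simp add: exp_of_nat_mult)
      finally show ?thesis .
    qed
    thus ?thesis unfolding g_def by (simp add: power_add)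
  qed
  hence "\<bar>real (2 ^ (b + j)) / real (3 ^ (k + 2)) - x\<bar> < e"
    using d(2)[OF jk(2)] gy by simp
  moreover have "b + j \<ge> 2" "k + 2 \<ge> 2" unfolding b_def by simp_all
  ultimately show ?thesis by blast
qed

lemma pow_gap:
  fixes p :: nat
  assumes "p \<ge> 2" "p ^ k < p ^ j"
  shows "p * p ^ k \<le> p ^ j"
proof -
  have "k < j" using assms power_strict_increasing_iff[of p k j] by simp
  hence "Suc k \<le> j" by simp
  hence "p ^ Suc k \<le> p ^ j" using assms(1) by (intro power_increasing) simp_all
  thus ?thesis by simp
qed

lemma no_ap_aux:
  fixes A :: "nat set" and a m b :: nat
  assumes A: "A = {(2::nat) ^ j | j::nat. j \<ge> 2} \<union> {(3::nat) ^ k | k::nat. k \<ge> 2}"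
  and "a \<in> A" "m \<in> A" "b \<in> A" "a < m" "m < b" "a + b = 2 * m"
  shows False
proof -
  have P2: "4 dvd x" if xm: "x \<in> {(2::nat) ^ j | j::nat. j \<ge> 2}" for x :: nat
  proof -
    obtain j :: nat where "x = 2 ^ j" "j \<ge> 2" using xm by blast
    moreover obtain i where "j = 2 + i" using \<open>j \<ge> 2\<close> le_Suc_ex by blast
    ultimately have "x = 4 * 2 ^ i" by (simp add: power_add)
    thus ?thesis by simp
  qed
  have P3: "3 dvd x \<and> odd x" if xm: "x \<in> {(3::nat) ^ k | k::nat. k \<ge> 2}" for x :: nat
  proof -
    obtain k :: nat where "x = 3 ^ k" "k \<ge> 2" using xm by blast
    thus ?thesis by (simp add: dvd_power)
  qed
  have ev4: "even x" if "4 dvd x" for x :: nat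
    using that dvd_trans[of 2 4 x] by simp
  have n3: "\<not> 3 dvd (2::nat) ^ j" for j
  proof
    assume h: "3 dvd (2::nat) ^ j"
    have "coprime (3::nat) (2^j)" by simp
    hence "is_unit (3::nat)" using coprime_common_divisor[of "3::nat" "2^j" 3] h \<open>coprime (3::nat) (2^j)\<close> by simp
    thus False by simp
  qed
  show False
  proof (cases "a \<in> {(2::nat) ^ j | j::nat. j \<ge> 2}")
    case a2: True
    show False
    proof (cases "b \<in> {(2::nat) ^ j | j::nat. j \<ge> 2}")
      case b2: True
      show False
      proof (cases "m \<in> {(2::nat) ^ j | j::nat. j \<ge> 2}")
        case True
        then obtain k where k: "m = 2 ^ k" by blast
        obtain j where j: "b = 2 ^ j" using b2 by blast
        have "2 * m \<le> b" using pow_gap[of 2 k j] k j assms(6) by simp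
        moreover have "a > 0" using a2 by auto
        ultimately show False using assms(7) by simp
      next
        case False
        hence m3: "odd m" using P3 assms(3) A by blast
        have "4 dvd a + b" using P2 a2 b2 by simp
        hence "4 dvd 2 * m" using assms(7) by simp
        then obtain t where "2 * m = 4 * t" by blast
        hence "m = 2 * t" by simp
        hence "2 dvd m" by simp
        thus False using m3 by simp
      qed
    next
      case False
      hence "odd b" using P3 assms(4) A by blast
      moreover have "even a" using P2[OF a2] ev4 by blast
      ultimately have "odd (a + b)" by simp
      thus False using assms(7) by simp
    qed
  next
    case a3: False
    hence a3: "3 dvd a \<and> odd a" using P3 assms(2) A by blast
    show False
    proof (cases "b \<in> {(2::nat) ^ j | j::nat. j \<ge> 2}")
      case True
      hence "even b" using P2 ev4 by blast
      hence "odd (a + b)" using a3 by simp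
      thus False using assms(7) by simp
    next
      case False
      hence b3: "b \<in> {(3::nat) ^ k | k::nat. k \<ge> 2}" using assms(4) A by blast
      show False
      proof (cases "m \<in> {(3::nat) ^ k | k::nat. k \<ge> 2}")
        case True
        then obtain k where k: "m = 3 ^ k" by blast
        obtain j where j: "b = 3 ^ j" using b3 by blast
        have "3 * m \<le> b" using pow_gap[of 3 k j] k j assms(6) by simp
        thus False using assms(5) assms(7) by linarith
      next
        case False
        then obtain k where k: "m = 2 ^ k" using assms(3) A by blast
        have "3 dvd a + b" using a3 P3[OF b3] by simp
        hence "(3::nat) dvd 2 * 2 ^ k" using assms(7) k by simp
        hence "3 dvd (2::nat) ^ Suc k" by simp
        thus False using n3 by blast
      qed
    qed
  qed
qed

theorem proposition4:
  defines "A \<equiv> {2 ^ j | j::nat. j \<ge> 2} \<union> {3 ^ k | k::nat. k \<ge> 2}"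
  shows "fractionally_dense A \<and> \<not> has_3AP A"
proof
  show "\<not> has_3AP A"
  proof
    assume "has_3AP A"
    then obtain c d where "d \<ge> 1" "c \<in> A" "c + d \<in> A" "c + 2 * d \<in> A"
      unfolding has_3AP_def by blast
    thus False using no_ap_aux[OF A_def[THEN meta_eq_to_obj_eq], of c "c + d" "c + 2 * d"] by simp
  qed
next
  have sub: "quotient_set A \<subseteq> {0..}" unfolding quotient_set_def by auto
  have c1: "closure (quotient_set A) \<subseteq> {0..}"
    by (rule closure_minimal[OF sub closed_atLeast])
  have pos: "{0<..} \<subseteq> closure (quotient_set A)"
  proof
    fix x :: real assume "x \<in> {0<..}"
    hence x: "x > 0" by simp
    show "x \<in> closure (quotient_set A)"
      unfolding closure_approachable
    proof (intro allI impI)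
      fix e :: real assume "e > 0"
      then obtain j k :: nat where jk: "j \<ge> 2" "k \<ge> 2" "\<bar>real (2^j) / real (3^k) - x\<bar> < e"
        using approx_pos[OF x] by blast
      have "real (2^j) / real (3^k) \<in> quotient_set A"
        unfolding quotient_set_def A_def using jk by blast
      thus "\<exists>y\<in>quotient_set A. dist y x < e" using jk(3) by (auto simp: dist_real_def)
    qed
  qed
  have "closure {0<..} \<subseteq> closure (quotient_set A)"
    using closure_mono[OF pos] by simp
  hence "{0..} \<subseteq> closure (quotient_set A)" by simp
  thus "fractionally_dense A" unfolding fractionally_dense_def using c1 by blast
qed

end
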